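(* There is a constant $c>0$ such that for every integer $m\ge 1$ there exist two NFAs, each with $m+1$ states, over an alphabet of cardinality $2m$, such that there is a tower of height at least $c\cdot 2^{2m}$ between their languages and there is no infinite tower between their languages.
   Context: For strings $v=a_1\cdots a_k$ and $w$, $v\preccurlyeq w$ if $w\in\Sigma^*a_1\Sigma^*a_2\Sigma^*\cdots\Sigma^*a_k\Sigma^*$. A sequence $(w_i)_{i=1}^r$ of strings is a tower between languages $K$ and $L$ if $w_1\in K\cup L$ and for all $i=1,\dots,r-1$: $w_i\preccurlyeq w_{i+1}$, $w_i\in K$ implies $w_{i+1}\in L$, and $w_i\in L$ implies $w_{i+1}\in K$; $r$ is its height. An infinite tower is an infinite sequence with the same properties. *)

theory Defs
  imports Complex_Main "HOL-Library.Sublist"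
begin

record ('q, 'a) nfa =
  states :: "'q set"
  alpha  :: "'a set"
  delta  :: "('q \<times> 'a \<times> 'q) set"
  init   :: "'q set"
  final  :: "'q set"

definition wf_nfa :: "('q, 'a) nfa \<Rightarrow> bool" where
  "wf_nfa A \<longleftrightarrow> finite (states A) \<and> finite (alpha A)
     \<and> delta A \<subseteq> states A \<times> alpha A \<times> states A
     \<and> init A \<subseteq> states A \<and> final A \<subseteq> states A"

fun reach :: "('q, 'a) nfa \<Rightarrow> 'q \<Rightarrow> 'a list \<Rightarrow> 'q \<Rightarrow> bool" where
  "reach A p [] q \<longleftrightarrow> p = q"
| "reach A p (a # w) q \<longleftrightarrow> (\<exists>p'. (p, a, p') \<in> delta A \<and> reach A p' w q)"

definition lang :: "('q, 'a) nfa \<Rightarrow> 'a list set" where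
  "lang A = {w. set w \<subseteq> alpha A \<and> (\<exists>p\<in>init A. \<exists>q\<in>final A. reach A p w q)}"

definition tower :: "'a list set \<Rightarrow> 'a list set \<Rightarrow> 'a list list \<Rightarrow> bool" where
  "tower K L ws \<longleftrightarrow> ws \<noteq> [] \<and> ws ! 0 \<in> K \<union> L \<and>
     (\<forall>i. Suc i < length ws \<longrightarrow>
        subseq (ws ! i) (ws ! Suc i) \<and>
        (ws ! i \<in> K \<longrightarrow> ws ! Suc i \<in> L) \<and>
        (ws ! i \<in> L \<longrightarrow> ws ! Suc i \<in> K))"

definition infinite_tower :: "'a list set \<Rightarrow> 'a list set \<Rightarrow> (nat \<Rightarrow> 'a list) \<Rightarrow> bool" where
  "infinite_tower K L w \<longleftrightarrow> w 0 \<in> K \<union> L \<and>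
     (\<forall>i. subseq (w i) (w (Suc i)) \<and>
        (w i \<in> K \<longrightarrow> w (Suc i) \<in> L) \<and>
        (w i \<in> L \<longrightarrow> w (Suc i) \<in> K))"

end

theory Submission
  imports Defs
begin


definition PA :: "nat \<Rightarrow> nat \<Rightarrow> nat \<Rightarrow> nat \<Rightarrow> bool" where
  "PA m p a q \<longleftrightarrow> (1 \<le> p \<and> p < m \<and> ((a < p \<and> q = p) \<or> (a = p \<and> q < p)))
     \<or> (p = m \<and> a < 2*m-1 \<and> (q = m \<or> (m \<le> a \<and> q < m)))"

definition PB :: "nat \<Rightarrow> nat \<Rightarrow> nat \<Rightarrow> nat \<Rightarrow> bool" where
  "PB m p a q \<longleftrightarrow> (p = 1 \<and> ((a < m \<and> q = 1) \<or> (a = 0 \<and> q = 0)))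
     \<or> (2 \<le> p \<and> p \<le> m \<and> ((a < m+p-2 \<and> q = p) \<or> (a = m+p-2 \<and> 1 \<le> q \<and> q < p)))"

definition NA :: "nat \<Rightarrow> (nat, nat) nfa" where
  "NA m = \<lparr>states = {..m}, alpha = {..<2*m}, delta = {(p,a,q). PA m p a q}, init = {..m}, final = {0}\<rparr>"

definition NB :: "nat \<Rightarrow> (nat, nat) nfa" where
  "NB m = \<lparr>states = {..m}, alpha = {..<2*m}, delta = {(p,a,q). PB m p a q}, init = {1..m}, final = {0}\<rparr>"

lemma NA_simps[simp]: "states (NA m) = {..m}" "alpha (NA m) = {..<2*m}" "init (NA m) = {..m}"
  "final (NA m) = {0}" "(p,a,q) \<in> delta (NA m) \<longleftrightarrow> PA m p a q"
  by (auto simp: NA_def)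

lemma NB_simps[simp]: "states (NB m) = {..m}" "alpha (NB m) = {..<2*m}" "init (NB m) = {1..m}"
  "final (NB m) = {0}" "(p,a,q) \<in> delta (NB m) \<longleftrightarrow> PB m p a q"
  by (auto simp: NB_def)

lemma reach_append: "reach A p (u @ v) q \<longleftrightarrow> (\<exists>r. reach A p u r \<and> reach A r v q)"
  by (induction u arbitrary: p) auto

lemma wf_NA: "wf_nfa (NA m)"
  unfolding wf_nfa_def by (auto simp: PA_def)

lemma wf_NB: "m \<ge> 1 \<Longrightarrow> wf_nfa (NB m)"
  unfolding wf_nfa_def by (auto simp: PB_def)

lemma NA_letters: "reach (NA m) p w q \<Longrightarrow> set w \<subseteq> {..<2*m-1}"
  by (induction w arbitrary: p) (auto simp: PA_def)

lemma NB_letters: "reach (NB m) p w q \<Longrightarrow> m \<ge> 1 \<Longrightarrow> set w \<subseteq> {..<2*m-1}"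
  by (induction w arbitrary: p) (auto simp: PB_def)

lemma NA_zero: "reach (NA m) 0 w q \<Longrightarrow> m \<ge> 1 \<Longrightarrow> w = [] \<and> q = 0"
  by (cases w) (auto simp: PA_def)

lemma NB_zero: "reach (NB m) 0 w q \<Longrightarrow> w = [] \<and> q = 0"
  by (cases w) (auto simp: PB_def)

lemma NA_last: "reach (NA m) p w 0 \<Longrightarrow> m \<ge> 1 \<Longrightarrow> w \<noteq> [] \<Longrightarrow> last w \<noteq> 0"
proof (induction w arbitrary: p)
  case Nil then show ?case by simp
next
  case (Cons a w)
  then obtain p' where t: "PA m p a p'" and r: "reach (NA m) p' w 0" by auto
  show ?case
  proof (cases "w = []")
    case True
    with r have "p' = 0" by simp
    with t Cons.prems True show ?thesis by (auto simp: PA_def)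
  next
    case False
    with Cons.IH[OF r] Cons.prems show ?thesis by simp
  qed
qed

lemma NB_last: "reach (NB m) p w 0 \<Longrightarrow> p \<noteq> 0 \<Longrightarrow> w \<noteq> [] \<and> last w = 0"
proof (induction w arbitrary: p)
  case Nil then show ?case by simp
next
  case (Cons a w)
  then obtain p' where t: "PB m p a p'" and r: "reach (NB m) p' w 0" by auto
  show ?case
  proof (cases "w = []")
    case True
    with r have "p' = 0" by simp
    with t True show ?thesis by (auto simp: PB_def)
  next
    case False
    have "p' \<noteq> 0" using NB_zero[of m w 0] r False by (cases "p' = 0") auto
    with Cons.IH[OF r] False show ?thesis by simp
  qed
qed


lemma subseq_cc_Cons: "a \<noteq> c \<Longrightarrow> subseq [c,c] (a # w) \<longleftrightarrow> subseq [c,c] w"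
  by simp

lemma subseq_cc_Cons_same: "subseq [c,c] (c # w) \<longleftrightarrow> c \<in> set w"
  by (simp add: subseq_singleton_left)

lemma NA_strict:
  assumes "reach (NA m) p w 0" "set w \<subseteq> {..c}" "c < m"
  shows "\<not> c < p \<and> (p < c \<longrightarrow> c \<notin> set w) \<and> \<not> subseq [c,c] w"
  using assms
proof (induction w arbitrary: p)
  case Nil then show ?case by simp
next
  case (Cons a w)
  then obtain p' where t: "PA m p a p'" and r: "reach (NA m) p' w 0" by auto
  have a: "a \<le> c" using Cons.prems by auto
  have ws: "set w \<subseteq> {..c}" using Cons.prems by auto
  note IH = Cons.IH[OF r ws \<open>c < m\<close>]
  from t show ?case unfolding PA_def
  proof (elim disjE conjE)
    assume "1 \<le> p" "p < m" "a < p" "p' = p"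
    with IH a show ?thesis by auto
  next
    assume "1 \<le> p" "p < m" "a = p" "p' < p"
    with IH a show ?thesis by (auto simp: subseq_singleton_left)
  next
    assume "p = m" "a < 2*m-1" "p' = m"
    with IH \<open>c < m\<close> show ?thesis by auto
  next
    assume "p = m" "m \<le> a"
    with a \<open>c < m\<close> show ?thesis by auto
  qed
qed

definition key :: "nat \<Rightarrow> nat \<Rightarrow> nat" where
  "key m p = (if p \<le> 1 then 0 else m + p - 2)"

lemma NB_strict:
  assumes "reach (NB m) p w 0" "set w \<subseteq> {..c}" "m \<le> c" "m \<ge> 1"
  shows "\<not> c < key m p \<and> (key m p < c \<longrightarrow> c \<notin> set w) \<and> \<not> subseq [c,c] w"
  using assms
proof (induction w arbitrary: p)
  case Nil then show ?case by (simp add: key_def)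
next
  case (Cons a w)
  then obtain p' where t: "PB m p a p'" and r: "reach (NB m) p' w 0" by auto
  have a: "a \<le> c" using Cons.prems by auto
  have ws: "set w \<subseteq> {..c}" using Cons.prems by auto
  note IH = Cons.IH[OF r ws \<open>m \<le> c\<close> \<open>m \<ge> 1\<close>]
  from t show ?case unfolding PB_def
  proof (elim disjE conjE)
    assume "p = 1" "a < m" "p' = 1"
    with IH a \<open>m \<le> c\<close> show ?thesis by (auto simp: key_def)
  next
    assume "p = 1" "a = 0" "p' = 0"
    with IH a \<open>m \<le> c\<close> \<open>m \<ge> 1\<close> show ?thesis by (auto simp: key_def)
  next
    assume "2 \<le> p" "p \<le> m" "a < m + p - 2" "p' = p"
    with IH a show ?thesis by (auto simp: key_def)
  next
    assume h: "2 \<le> p" "p \<le> m" "a = m + p - 2" "1 \<le> p'" "p' < p"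
    then have kk: "key m p' < key m p" "key m p = a" by (auto simp: key_def)
    show ?thesis
    proof (cases "a = c")
      case True
      with IH kk show ?thesis by (auto simp: subseq_singleton_left)
    next
      case False
      with IH kk a show ?thesis by auto
    qed
  qed
qed

lemma NA_R: "reach (NA m) p (x @ c # y) 0 \<Longrightarrow> \<exists>q \<le> m. reach (NA m) q y 0"
proof -
  assume "reach (NA m) p (x @ c # y) 0"
  then obtain r r' where "PA m r c r'" "reach (NA m) r' y 0" by (auto simp: reach_append)
  moreover have "r' \<le> m" using \<open>PA m r c r'\<close> by (auto simp: PA_def)
  ultimately show ?thesis by blast
qed

lemma NB_R: "reach (NB m) p (x @ c # y) 0 \<Longrightarrow> c \<ge> 1 \<Longrightarrow> \<exists>q. 1 \<le> q \<and> q \<le> m \<and> reach (NB m) q y 0"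
proof -
  assume "reach (NB m) p (x @ c # y) 0" "c \<ge> 1"
  then obtain r r' where "PB m r c r'" "reach (NB m) r' y 0" by (auto simp: reach_append)
  moreover have "1 \<le> r' \<and> r' \<le> m" using \<open>PB m r c r'\<close> \<open>c \<ge> 1\<close> by (auto simp: PB_def)
  ultimately show ?thesis by blast
qed

lemma NA_loop_minor: "1 \<le> k \<Longrightarrow> k < m \<Longrightarrow> set v \<subseteq> {..<k} \<Longrightarrow> reach (NA m) k v k"
  by (induction v) (auto simp: PA_def)

lemma NA_loop_top: "set v \<subseteq> {..<2*m-1} \<Longrightarrow> reach (NA m) m v m"
  by (induction v) (auto simp: PA_def)

lemma NB_loop1: "set v \<subseteq> {..<m} \<Longrightarrow> reach (NB m) 1 v 1"
  by (induction v) (auto simp: PB_def)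

lemma NB_loop: "2 \<le> p \<Longrightarrow> p \<le> m \<Longrightarrow> set v \<subseteq> {..<m+p-2} \<Longrightarrow> reach (NB m) p v p"
  by (induction v) (auto simp: PB_def)


primrec Tw :: "nat \<Rightarrow> nat list list" where
  "Tw 0 = [[]]"
| "Tw (Suc k) = Tw k @ map (\<lambda>u. last (Tw k) @ k # u) (Tw k)"

lemma Tw_len[simp]: "length (Tw k) = 2^k"
  by (induction k) auto

lemma Tw_ne[simp]: "Tw k \<noteq> []"
  using Tw_len[of k] by (metis list.size(3) power_not_zero zero_neq_numeral)

lemma Tw_lo: "i < 2^k \<Longrightarrow> Tw (Suc k) ! i = Tw k ! i"
  by (simp add: nth_append)

lemma Tw_hi: "i < 2^k \<Longrightarrow> Tw (Suc k) ! (2^k + i) = last (Tw k) @ k # Tw k ! i"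
  by (simp add: nth_append)

lemma Tw_last: "last (Tw k) = Tw k ! (2^k - 1)"
  by (simp add: last_conv_nth)

lemma split_idx: "(i::nat) < 2^Suc k \<Longrightarrow> i < 2^k \<or> (\<exists>i'. i' < 2^k \<and> i = 2^k + i')"
  by (cases "i < 2^k") (auto intro!: exI[of _ "i - 2^k"])

lemma Tw_set: "i < 2^k \<Longrightarrow> set (Tw k ! i) \<subseteq> {..<k}"
proof (induction k arbitrary: i)
  case 0 then show ?case by simp
next
  case (Suc k)
  have L: "set (last (Tw k)) \<subseteq> {..<k}" using Suc.IH[of "2^k - 1"] by (simp add: Tw_last)
  from split_idx[OF Suc.prems] show ?case
  proof
    assume "i < 2^k" then show ?thesis using Suc.IH[of i] Tw_lo[of i k] by auto
  next
    assume "\<exists>i'. i' < 2^k \<and> i = 2^k + i'"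
    then obtain i' where "i' < 2^k" "i = 2^k + i'" by blast
    then show ?thesis using Suc.IH[of i'] Tw_hi[of i' k] L by auto
  qed
qed

lemma Tw_last_set: "set (last (Tw k)) \<subseteq> {..<k}"
  using Tw_set[of "2^k - 1" k] by (simp add: Tw_last)

lemma Tw_0: "Tw k ! 0 = []"
  by (induction k) (auto simp: nth_append)

lemma Tw_step: "Suc i < 2^k \<Longrightarrow> \<exists>a. Tw k ! Suc i = Tw k ! i @ [a]"
proof (induction k arbitrary: i)
  case 0 then show ?case by simp
next
  case (Suc k)
  show ?case
  proof (cases "Suc i < 2^k")
    case True
    then show ?thesis using Suc.IH[OF True] by (simp add: nth_append)
  next
    case False
    show ?thesis
    proof (cases "Suc i = 2^k")
      case True
      then have "Tw (Suc k) ! Suc i = last (Tw k) @ [k]"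
        using Tw_hi[of 0 k] by (simp add: Tw_0)
      moreover have "i = 2^k - 1" using True by simp
      moreover have "Tw (Suc k) ! i = last (Tw k)"
        using True Tw_lo[of i k] \<open>i = 2^k - 1\<close> by (simp add: Tw_last)
      ultimately show ?thesis by simp
    next
      case False2: False
      then obtain i' where i': "i = 2^k + i'" "Suc i' < 2^k"
        using False Suc.prems by (intro that[of "i - 2^k"]) auto
      then obtain a where "Tw k ! Suc i' = Tw k ! i' @ [a]" using Suc.IH by blast
      then show ?thesis using i' Tw_hi[of i' k] Tw_hi[of "Suc i'" k] by auto
    qed
  qed
qed

lemma PL:
  assumes "m \<ge> 1" "k \<le> 2*m-1"
  shows "\<forall>i<2^k. odd i \<longrightarrow> (\<exists>q. 1 \<le> q \<and> q \<le> (if k \<le> m then 1 else k-m+1) \<and> reach (NB m) q (Tw k ! i) 0)"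
  using assms(2)
proof (induction k)
  case 0 then show ?case by simp
next
  case (Suc k)
  have IH: "\<forall>i<2^k. odd i \<longrightarrow> (\<exists>q. 1 \<le> q \<and> q \<le> (if k \<le> m then 1 else k-m+1) \<and> reach (NB m) q (Tw k ! i) 0)"
    using Suc by simp
  show ?case
  proof (intro allI impI)
    fix i :: nat assume i: "i < 2^Suc k" "odd i"
    from split_idx[OF i(1)] show "\<exists>q. 1 \<le> q \<and> q \<le> (if Suc k \<le> m then 1 else Suc k-m+1) \<and> reach (NB m) q (Tw (Suc k) ! i) 0"
    proof
      assume lo: "i < 2^k"
      then obtain q where q: "1 \<le> q" "q \<le> (if k \<le> m then 1 else k-m+1)" "reach (NB m) q (Tw k ! i) 0"
        using IH i by blast
      have "q \<le> (if Suc k \<le> m then 1 else Suc k-m+1)" using q(2) by (auto split: if_splits)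
      then show ?thesis using q Tw_lo[OF lo] by auto
    next
      assume "\<exists>i'. i' < 2^k \<and> i = 2^k + i'"
      then obtain i' where i': "i' < 2^k" "i = 2^k + i'" by blast
      have v: "set (last (Tw k)) \<subseteq> {..<k}" by (rule Tw_last_set)
      show ?thesis
      proof (cases "k = 0")
        case True
        then have "Tw (Suc k) ! i = [0]" using i' by (simp add: Tw_hi)
        moreover have "reach (NB m) 1 [0] 0" by (simp add: PB_def)
        ultimately show ?thesis by auto
      next
        case False
        then have "odd i'" using i i' by auto
        then obtain q where q: "1 \<le> q" "q \<le> (if k \<le> m then 1 else k-m+1)" "reach (NB m) q (Tw k ! i') 0"
          using IH i' by blast
        have eq: "Tw (Suc k) ! i = last (Tw k) @ k # Tw k ! i'" using i' Tw_hi by simp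
        show ?thesis
        proof (cases "k < m")
          case True
          then have "q = 1" using q by auto
          have "set (last (Tw k) @ [k]) \<subseteq> {..<m}" using v True by auto
          then have "reach (NB m) 1 (last (Tw k) @ [k]) 1" using NB_loop1 by blast
          then have "reach (NB m) 1 ((last (Tw k) @ [k]) @ Tw k ! i') 0"
            using q \<open>q = 1\<close> reach_append by metis
          then show ?thesis using eq True by auto
        next
          case False
          define p where "p = k - m + 2"
          have p: "2 \<le> p" "p \<le> m" "m + p - 2 = k" using False Suc.prems \<open>m \<ge> 1\<close> by (auto simp: p_def)
          have "reach (NB m) p (last (Tw k)) p" using NB_loop[of p m] p v by auto
          moreover have "q < p" using p(1,2) q(2) False by (auto simp: p_def split: if_splits)
          moreover have "PB m p k q" using p q \<open>q < p\<close> by (auto simp: PB_def)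
          ultimately have "reach (NB m) p (last (Tw k) @ k # Tw k ! i') 0"
            using q(3) reach_append[of "NB m" p "last (Tw k)"] by auto
          then show ?thesis using eq p False by (intro exI[of _ p]) auto
        qed
      qed
    qed
  qed
qed

lemma PK:
  assumes "m \<ge> 1" "k \<le> 2*m-1"
  shows "\<forall>i<2^k. even i \<longrightarrow> (\<exists>q. q < (if k \<le> m then max k 1 else Suc m) \<and> reach (NA m) q (Tw k ! i) 0)"
  using assms(2)
proof (induction k)
  case 0 then show ?case by (simp add: PA_def)
next
  case (Suc k)
  have IH: "\<forall>i<2^k. even i \<longrightarrow> (\<exists>q. q < (if k \<le> m then max k 1 else Suc m) \<and> reach (NA m) q (Tw k ! i) 0)"
    using Suc by simp
  show ?case
  proof (intro allI impI)
    fix i :: nat assume i: "i < 2^Suc k" "even i"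
    from split_idx[OF i(1)] show "\<exists>q. q < (if Suc k \<le> m then max (Suc k) 1 else Suc m) \<and> reach (NA m) q (Tw (Suc k) ! i) 0"
    proof
      assume lo: "i < 2^k"
      then obtain q where q: "q < (if k \<le> m then max k 1 else Suc m)" "reach (NA m) q (Tw k ! i) 0"
        using IH i by blast
      have "q < (if Suc k \<le> m then max (Suc k) 1 else Suc m)" using q(1) by (auto split: if_splits)
      then show ?thesis using q Tw_lo[OF lo] by auto
    next
      assume "\<exists>i'. i' < 2^k \<and> i = 2^k + i'"
      then obtain i' where i': "i' < 2^k" "i = 2^k + i'" by blast
      have v: "set (last (Tw k)) \<subseteq> {..<k}" by (rule Tw_last_set)
      show ?thesis
      proof (cases "k = 0")
        case True
        then show ?thesis using i i' by simp
      next
        case False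
        then have "even i'" using i i' by auto
        then obtain q where q: "q < (if k \<le> m then max k 1 else Suc m)" "reach (NA m) q (Tw k ! i') 0"
          using IH i' by blast
        have eq: "Tw (Suc k) ! i = last (Tw k) @ k # Tw k ! i'" using i' Tw_hi by simp
        show ?thesis
        proof (cases "k < m")
          case True
          have "reach (NA m) k (last (Tw k)) k" using NA_loop_minor[of k m] False True v by auto
          moreover have "PA m k k q" using q True False by (auto simp: PA_def)
          ultimately have "reach (NA m) k (last (Tw k) @ k # Tw k ! i') 0"
            using q(2) reach_append[of "NA m" k "last (Tw k)"] by auto
          then show ?thesis using eq True by (intro exI[of _ k]) auto
        next
          case False
          have kN: "k < 2*m-1" using Suc.prems by auto
          have "set (last (Tw k)) \<subseteq> {..<2*m-1}" using v kN by auto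
          then have lm: "reach (NA m) m (last (Tw k)) m" using NA_loop_top by blast
          have "reach (NA m) m (last (Tw k) @ k # Tw k ! i') 0"
          proof (cases "q < m")
            case True
            then have "PA m m k q" using False kN by (auto simp: PA_def)
            then show ?thesis using lm q(2) reach_append[of "NA m" m "last (Tw k)"] by auto
          next
            case qm: False
            then have "q = m" using q(1) False by (auto split: if_splits)
            have "set (last (Tw k) @ [k]) \<subseteq> {..<2*m-1}" using v kN by auto
            then have "reach (NA m) m (last (Tw k) @ [k]) m" using NA_loop_top by blast
            then have "reach (NA m) m ((last (Tw k) @ [k]) @ Tw k ! i') 0"
              using q(2) \<open>q = m\<close> reach_append by metis
            then show ?thesis by simp
          qed
          then show ?thesis using eq False by (intro exI[of _ m]) auto
        qed
      qed
    qed
  qed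
qed


lemma memA: "w \<in> lang (NA m) \<longleftrightarrow> set w \<subseteq> {..<2*m} \<and> (\<exists>p\<le>m. reach (NA m) p w 0)"
  by (auto simp: lang_def)

lemma memB: "w \<in> lang (NB m) \<longleftrightarrow> set w \<subseteq> {..<2*m} \<and> (\<exists>p. 1 \<le> p \<and> p \<le> m \<and> reach (NB m) p w 0)"
  by (auto simp: lang_def)

lemma SK: "m \<ge> 1 \<Longrightarrow> c < m \<Longrightarrow> w \<in> lang (NA m) \<Longrightarrow> set w \<subseteq> {..c} \<Longrightarrow> \<not> subseq [c,c] w"
  using NA_strict by (auto simp: memA)

lemma SL: "m \<ge> 1 \<Longrightarrow> m \<le> c \<Longrightarrow> w \<in> lang (NB m) \<Longrightarrow> set w \<subseteq> {..c} \<Longrightarrow> \<not> subseq [c,c] w"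
  using NB_strict by (auto simp: memB)

lemma RA: "x @ c # y \<in> lang (NA m) \<Longrightarrow> y \<in> lang (NA m)"
  using NA_R[of m _ x c y] by (auto simp: memA)

lemma RB: "c \<ge> 1 \<Longrightarrow> x @ c # y \<in> lang (NB m) \<Longrightarrow> y \<in> lang (NB m)"
  using NB_R[of m _ x c y] by (auto simp: memB)

lemma baseA: "m \<ge> 1 \<Longrightarrow> w \<in> lang (NA m) \<Longrightarrow> set w \<subseteq> {..<1} \<Longrightarrow> w = []"
proof -
  assume m: "m \<ge> 1" and w: "w \<in> lang (NA m)" and s: "set w \<subseteq> {..<1}"
  then obtain p where "reach (NA m) p w 0" by (auto simp: memA)
  moreover have "set w \<subseteq> {..0}" using s by auto
  ultimately have "\<not> 0 < p" using NA_strict[of m p w 0] m by auto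
  then have "p = 0" by simp
  then show ?thesis using NA_zero \<open>reach (NA m) p w 0\<close> m by blast
qed

lemma nilB: "[] \<notin> lang (NB m)"
  by (auto simp: memB)

lemma lettersA: "w \<in> lang (NA m) \<Longrightarrow> set w \<subseteq> {..<2*m-1}"
proof -
  assume "w \<in> lang (NA m)"
  then obtain p where "reach (NA m) p w 0" by (auto simp: memA)
  then show ?thesis by (rule NA_letters)
qed

lemma lettersB: "m \<ge> 1 \<Longrightarrow> w \<in> lang (NB m) \<Longrightarrow> set w \<subseteq> {..<2*m-1}"
proof -
  assume "m \<ge> 1" "w \<in> lang (NB m)"
  then obtain p where "reach (NB m) p w 0" by (auto simp: memB)
  then show ?thesis using NB_letters \<open>m \<ge> 1\<close> by blast
qed

lemma disjAB: "m \<ge> 1 \<Longrightarrow> w \<in> lang (NA m) \<Longrightarrow> w \<notin> lang (NB m)"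
proof
  assume m: "m \<ge> 1" and a: "w \<in> lang (NA m)" and b: "w \<in> lang (NB m)"
  from b obtain p where "1 \<le> p" "reach (NB m) p w 0" by (auto simp: memB)
  then have "w \<noteq> [] \<and> last w = 0" using NB_last by fastforce
  moreover from a obtain q where "reach (NA m) q w 0" by (auto simp: memA)
  ultimately show False using NA_last m by blast
qed

definition alt :: "'a list set \<Rightarrow> 'a list set \<Rightarrow> (nat \<Rightarrow> 'a list) \<Rightarrow> bool" where
  "alt X Y w \<longleftrightarrow> (\<forall>i. subseq (w i) (w (Suc i))) \<and> (\<forall>i. w (2*i) \<in> X \<and> w (2*i+1) \<in> Y)"

lemma chain_mono: assumes "\<forall>i. subseq (w i) (w (Suc i))" "i \<le> j" shows "subseq (w i) (w j)"
  using assms(2)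
proof (induction j rule: dec_induct)
  case base then show ?case by simp
next
  case (step j) then show ?case using subseq_order.order_trans assms(1) by blast
qed

lemma decomp: "c \<in> set w \<Longrightarrow> \<not> subseq [c,c] w \<Longrightarrow> \<exists>x y. w = x @ c # y \<and> c \<notin> set x \<and> c \<notin> set y"
proof -
  assume c: "c \<in> set w" and n: "\<not> subseq [c,c] w"
  obtain x y where w: "w = x @ c # y" "c \<notin> set x" using split_list_first[OF c] by blast
  have "c \<notin> set y"
  proof
    assume "c \<in> set y"
    then have "subseq [c] y" by (simp add: subseq_singleton_left)
    then have "subseq [c,c] (c # y)" by simp
    then have "subseq [c,c] w" unfolding w by (rule subseq_drop_many)
    with n show False by simp
  qed
  with w show ?thesis by blast
qed

lemma embed:
  assumes "subseq (x @ c # y) (x' @ c # y')" "c \<notin> set x'" "c \<notin> set y'"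
  shows "subseq y y'"
proof -
  obtain us vs where 1: "x' @ c # y' = us @ vs" "subseq (c # y) vs"
    using list_emb_appendD[OF assms(1)] by blast
  obtain us' v vs' where 2: "vs = us' @ v # vs'" "c = v" "subseq y vs'"
    using list_emb_ConsD[OF 1(2)] by blast
  have "x' @ c # y' = (us @ us') @ c # vs'" using 1 2 by simp
  then have "y' = vs'" using append_Cons_eq_iff[OF assms(2,3)] by blast
  with 2 show ?thesis by simp
qed

lemma noalt:
  assumes m: "m \<ge> 1" and c: "1 \<le> c" "c \<le> 2*m-1"
  shows "((X = lang (NA m) \<and> Y = lang (NB m)) \<or> (X = lang (NB m) \<and> Y = lang (NA m)))
     \<Longrightarrow> alt X Y w \<Longrightarrow> (\<forall>i. set (w i) \<subseteq> {..<c}) \<Longrightarrow> False"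
  using c
proof (induction c arbitrary: X Y w rule: nat_induct_at_least)
  case base
  have al': "\<And>t. w (2*t) \<in> X \<and> w (2*t+1) \<in> Y" using base.prems(2) by (auto simp: alt_def)
  have "\<exists>j. w j \<in> lang (NB m) \<and> w (Suc j) \<in> lang (NA m)"
    using base.prems(1)
  proof (elim disjE conjE)
    assume "X = lang (NA m)" "Y = lang (NB m)"
    moreover have "w (2*0+1) \<in> Y" "w (2*1) \<in> X" using al' by blast+
    ultimately show ?thesis by (intro exI[of _ 1]) (simp add: numeral_2_eq_2)
  next
    assume "X = lang (NB m)" "Y = lang (NA m)"
    moreover have "w (2*0) \<in> X" "w (2*0+1) \<in> Y" using al' by blast+
    ultimately show ?thesis by (intro exI[of _ 0]) simp
  qed
  then obtain j where j: "w j \<in> lang (NB m)" "w (Suc j) \<in> lang (NA m)" by blast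
  have "w (Suc j) = []" using baseA[OF m j(2)] base.prems(3) by blast
  moreover have "subseq (w j) (w (Suc j))" using base.prems(2) by (auto simp: alt_def)
  ultimately have "w j = []" by simp
  with j nilB show False by metis
next
  case (Suc c)
  note XY = Suc.prems(1) and al = Suc.prems(2) and bd = Suc.prems(3)
  have sub: "\<forall>i. subseq (w i) (w (Suc i))" using al by (auto simp: alt_def)
  show False
  proof (cases "\<exists>i. c \<in> set (w i)")
    case False
    have "\<forall>i. set (w i) \<subseteq> {..<c}"
    proof (intro allI subsetI)
      fix i x assume x: "x \<in> set (w i)"
      then have "x < Suc c" "x \<noteq> c" using bd False by auto
      then show "x \<in> {..<c}" by simp
    qed
    moreover have "c \<le> 2*m-1" using Suc.prems by simp
    ultimately show False using Suc.IH[OF XY al] by blast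
  next
    case True
    then obtain i0 where i0: "c \<in> set (w i0)" by blast
    define i where "i = 2*i0"
    have inc: "\<forall>j. c \<in> set (w (i + j))"
    proof
      fix j
      have "subseq (w i0) (w (i + j))" using chain_mono[OF sub] by (simp add: i_def)
      then show "c \<in> set (w (i + j))" using i0 by (meson subseq_order.order_trans subseq_singleton_left)
    qed
    define Z where "Z = (if c < m then lang (NA m) else lang (NB m))"
    have SZ: "\<And>u. u \<in> Z \<Longrightarrow> set u \<subseteq> {..c} \<Longrightarrow> \<not> subseq [c,c] u"
      using SK[OF m] SL[OF m] by (auto simp: Z_def split: if_splits)
    have ZXY: "Z = X \<or> Z = Y" using XY by (auto simp: Z_def)
    have memX: "\<And>t. w (2*t) \<in> X" and memY: "\<And>t. w (2*t+1) \<in> Y" using al by (auto simp: alt_def)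
    have oneZ: "\<And>j. w j \<in> Z \<or> w (Suc j) \<in> Z"
    proof -
      fix j
      show "w j \<in> Z \<or> w (Suc j) \<in> Z"
      proof (cases "even j")
        case True
        then obtain t where "j = 2*t" by blast
        then show ?thesis using memX[of t] memY[of t] ZXY by auto
      next
        case False
        then obtain t where t: "j = 2*t+1" by (metis oddE)
        then have "Suc j = 2*(Suc t)" by simp
        then show ?thesis using memX[of "Suc t"] memY[of t] ZXY t by auto
      qed
    qed
    have bd': "\<And>j. set (w j) \<subseteq> {..c}"
    proof -
      fix j show "set (w j) \<subseteq> {..c}" using bd[rule_format, of j] by (auto simp: less_Suc_eq_le subset_iff)
    qed
    have ncc: "\<And>j. \<not> subseq [c,c] (w j)"
    proof -
      fix j
      show "\<not> subseq [c,c] (w j)"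
      proof (cases "w j \<in> Z")
        case True then show ?thesis using SZ bd' by blast
      next
        case False
        then have "\<not> subseq [c,c] (w (Suc j))" using oneZ SZ bd' by blast
        then show ?thesis using sub subseq_order.order_trans by blast
      qed
    qed
    have "\<forall>j. \<exists>p. w (i + j) = fst p @ c # snd p \<and> c \<notin> set (fst p) \<and> c \<notin> set (snd p)"
      using decomp inc ncc by fastforce
    then obtain f where f: "\<And>j. w (i + j) = fst (f j) @ c # snd (f j) \<and> c \<notin> set (fst (f j)) \<and> c \<notin> set (snd (f j))"
      by metis
    define y where "y j = snd (f j)" for j
    have ysub: "\<forall>j. subseq (y j) (y (Suc j))"
    proof
      fix j
      have "subseq (w (i + j)) (w (i + Suc j))" using sub by simp
      then show "subseq (y j) (y (Suc j))" using f[of j] f[of "Suc j"] embed unfolding y_def by metis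
    qed
    have RR: "\<And>V x u. (V = lang (NA m) \<or> V = lang (NB m)) \<Longrightarrow> x @ c # u \<in> V \<Longrightarrow> u \<in> V"
      using RA RB Suc.hyps by blast
    have XX: "X = lang (NA m) \<or> X = lang (NB m)" "Y = lang (NA m) \<or> Y = lang (NB m)" using XY by auto
    have yX: "\<And>t. y (2*t) \<in> X"
    proof -
      fix t
      have "w (i + 2*t) \<in> X" using memX[of "i0 + t"] by (simp add: i_def algebra_simps)
      then show "y (2*t) \<in> X" using f[of "2*t"] RR[OF XX(1)] unfolding y_def by metis
    qed
    have yY: "\<And>t. y (2*t+1) \<in> Y"
    proof -
      fix t
      have "w (i + (2*t+1)) \<in> Y" using memY[of "i0 + t"] by (simp add: i_def algebra_simps)
      then show "y (2*t+1) \<in> Y" using f[of "2*t+1"] RR[OF XX(2)] unfolding y_def by metis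
    qed
    have "alt X Y y" using ysub yX yY by (auto simp: alt_def)
    moreover have "\<forall>j. set (y j) \<subseteq> {..<c}"
    proof
      fix j
      have "set (w (i + j)) \<subseteq> {..c}" by (rule bd')
      then show "set (y j) \<subseteq> {..<c}" using f[of j] unfolding y_def by (auto simp: le_less)
    qed
    moreover have "c \<le> 2*m-1" using Suc.prems by simp
    ultimately show False using Suc.IH[OF XY] by blast
  qed
qed


lemma no_inf:
  assumes m: "m \<ge> 1" and it: "infinite_tower (lang (NA m)) (lang (NB m)) w"
  shows False
proof -
  let ?K = "lang (NA m)" and ?L = "lang (NB m)"
  have sub: "\<forall>i. subseq (w i) (w (Suc i))" using it by (auto simp: infinite_tower_def)
  have stepK: "\<And>i. w i \<in> ?K \<Longrightarrow> w (Suc i) \<in> ?L" and stepL: "\<And>i. w i \<in> ?L \<Longrightarrow> w (Suc i) \<in> ?K"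
    using it by (auto simp: infinite_tower_def)
  have alts: "alt ?K ?L w \<or> alt ?L ?K w"
  proof (cases "w 0 \<in> ?K")
    case True
    have "\<forall>i. w (2*i) \<in> ?K \<and> w (2*i+1) \<in> ?L"
    proof
      fix i show "w (2*i) \<in> ?K \<and> w (2*i+1) \<in> ?L"
        by (induction i) (use True stepK stepL in auto)
    qed
    then show ?thesis using sub by (auto simp: alt_def)
  next
    case False
    then have L0: "w 0 \<in> ?L" using it by (auto simp: infinite_tower_def)
    have "\<forall>i. w (2*i) \<in> ?L \<and> w (2*i+1) \<in> ?K"
    proof
      fix i show "w (2*i) \<in> ?L \<and> w (2*i+1) \<in> ?K"
        by (induction i) (use L0 stepK stepL in auto)
    qed
    then show ?thesis using sub by (auto simp: alt_def)
  qed
  have KL: "\<And>i. w i \<in> ?K \<or> w i \<in> ?L"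
  proof -
    fix i :: nat
    obtain t where "i = 2*t \<or> i = 2*t+1" by (metis evenE oddE)
    then show "w i \<in> ?K \<or> w i \<in> ?L" using alts unfolding alt_def by auto
  qed
  have bd: "\<forall>i. set (w i) \<subseteq> {..<2*m-1}"
    using KL lettersA lettersB[OF m] by blast
  have one: "1 \<le> 2*m-1" using m by simp
  note NA' = noalt[OF m one order_refl]
  from alts show False
  proof
    assume "alt ?K ?L w" then show False using NA' bd by blast
  next
    assume "alt ?L ?K w" then show False using NA' bd by blast
  qed
qed

lemma the_tower:
  assumes m: "m \<ge> 1"
  shows "tower (lang (NA m)) (lang (NB m)) (Tw (2*m-1))"
proof -
  let ?K = "lang (NA m)" and ?L = "lang (NB m)" and ?N = "2*m-1"
  have inK: "\<And>i. i < 2^?N \<Longrightarrow> even i \<Longrightarrow> Tw ?N ! i \<in> ?K"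
  proof -
    fix i :: nat assume i: "i < 2^?N" "even i"
    obtain q where q: "q < (if ?N \<le> m then max ?N 1 else Suc m)" "reach (NA m) q (Tw ?N ! i) 0"
      using PK[OF m, of ?N] i by auto
    have "set (Tw ?N ! i) \<subseteq> {..<2*m}" using Tw_set[OF i(1)] by auto
    moreover have "q \<le> m" using q(1) m by (auto split: if_splits)
    ultimately show "Tw ?N ! i \<in> ?K" using q(2) by (auto simp: memA)
  qed
  have inL: "\<And>i. i < 2^?N \<Longrightarrow> odd i \<Longrightarrow> Tw ?N ! i \<in> ?L"
  proof -
    fix i :: nat assume i: "i < 2^?N" "odd i"
    obtain q where q: "1 \<le> q" "q \<le> (if ?N \<le> m then 1 else ?N-m+1)" "reach (NB m) q (Tw ?N ! i) 0"
      using PL[OF m, of ?N] i by auto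
    have "set (Tw ?N ! i) \<subseteq> {..<2*m}" using Tw_set[OF i(1)] by auto
    moreover have "q \<le> m" using q(2) m by (auto split: if_splits)
    ultimately show "Tw ?N ! i \<in> ?L" using q by (auto simp: memB)
  qed
  show ?thesis unfolding tower_def
  proof (intro conjI allI impI)
    show "Tw ?N \<noteq> []" by simp
    show "Tw ?N ! 0 \<in> ?K \<union> ?L" using inK[of 0] by simp
  next
    fix i assume i: "Suc i < length (Tw ?N)"
    then have i': "Suc i < 2^?N" by simp
    obtain a where "Tw ?N ! Suc i = Tw ?N ! i @ [a]" using Tw_step[OF i'] by blast
    then show "subseq (Tw ?N ! i) (Tw ?N ! Suc i)" by (simp add: subseq_rev_drop_many)
  next
    fix i assume i: "Suc i < length (Tw ?N)" and K: "Tw ?N ! i \<in> ?K"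
    then have i': "Suc i < 2^?N" by simp
    have "even i"
    proof (rule ccontr)
      assume "odd i"
      then have "Tw ?N ! i \<in> ?L" using inL i' by simp
      with K disjAB[OF m] show False by blast
    qed
    then show "Tw ?N ! Suc i \<in> ?L" using inL[OF i'] by simp
  next
    fix i assume i: "Suc i < length (Tw ?N)" and L: "Tw ?N ! i \<in> ?L"
    then have i': "Suc i < 2^?N" by simp
    have "odd i"
    proof (rule ccontr)
      assume "\<not> odd i"
      then have "Tw ?N ! i \<in> ?K" using inK i' by simp
      with L disjAB[OF m] show False by blast
    qed
    then show "Tw ?N ! Suc i \<in> ?K" using inK[OF i'] by simp
  qed
qed

theorem theorem10:
  shows "\<exists>c::real. c > 0 \<and> (\<forall>m::nat. m \<ge> 1 \<longrightarrow>
     (\<exists>(A :: (nat, nat) nfa) (B :: (nat, nat) nfa).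
        wf_nfa A \<and> wf_nfa B \<and>
        card (states A) = m + 1 \<and> card (states B) = m + 1 \<and>
        alpha A = alpha B \<and> card (alpha A) = 2 * m \<and>
        (\<exists>ws. tower (lang A) (lang B) ws \<and> real (length ws) \<ge> c * 2 ^ (2 * m)) \<and>
        \<not> (\<exists>w. infinite_tower (lang A) (lang B) w)))"
proof (intro exI[of _ "1/2"] conjI allI impI)
  show "(0::real) < 1/2" by simp
next
  fix m :: nat assume m: "m \<ge> 1"
  have len: "real (length (Tw (2*m-1))) \<ge> 1/2 * 2^(2*m)"
  proof -
    have "(2::real)^(2*m) = 2 * 2^(2*m-1)"
      using m by (metis Suc_diff_1 mult_pos_pos pos2 power_Suc zero_less_one_class.zero_less_one order_less_le_trans one_le_numeral)
    then show ?thesis by simp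
  qed
  show "\<exists>(A :: (nat, nat) nfa) (B :: (nat, nat) nfa).
        wf_nfa A \<and> wf_nfa B \<and>
        card (states A) = m + 1 \<and> card (states B) = m + 1 \<and>
        alpha A = alpha B \<and> card (alpha A) = 2 * m \<and>
        (\<exists>ws. tower (lang A) (lang B) ws \<and> real (length ws) \<ge> 1/2 * 2 ^ (2 * m)) \<and>
        \<not> (\<exists>w. infinite_tower (lang A) (lang B) w)"
    using wf_NA[of m] wf_NB[OF m] the_tower[OF m] len no_inf[OF m]
    by (intro exI[of _ "NA m"] exI[of _ "NB m"]) auto
qed

end
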